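(* Let $f:\mathbb{R}^n\to\mathbb{R}$ be a continuous loss function which is $\mu$-strongly convex and $L$-smooth, with global minimum $w^*$. Then every sequence $(w_i)$ generated by the Loss-Guarded L2O algorithm using deterministic gradient descent with step size $\frac{\alpha}{L}$, $\alpha\in\,]0,\min(2,2\mu L)[$, as the guarding mechanism converges to $w^*$: $\lim_{i\to\infty}w_i=w^*$.
   Context: Loss-Guarded L2O algorithm with deterministic gradient descent: at each step $i$, an arbitrary black-box rule proposes a point $y_i$, the fallback proposes $z_i=w_i-\frac{\alpha}{L}\nabla f(w_i)$, and $w_{i+1}=y_i$ if $f(y_i)<f(z_i)$, otherwise $w_{i+1}=z_i$. $L$-smooth: $f(y)\le f(x)+\langle\nabla f(x),y-x\rangle+\frac{L}{2}\|y-x\|_2^2$; $\mu$-strongly convex: $f(y)\ge f(x)+\langle\nabla f(x),y-x\rangle+\frac{\mu}{2}\|y-x\|_2^2$, for all $x,y$. *)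

theory Defs
  imports "HOL-Analysis.Analysis"
begin

definition is_gradient :: "('a::real_inner \<Rightarrow> real) \<Rightarrow> ('a \<Rightarrow> 'a) \<Rightarrow> bool" where
  "is_gradient f grad \<longleftrightarrow> (\<forall>x. (f has_derivative (\<lambda>h. grad x \<bullet> h)) (at x))"

definition L_smooth :: "real \<Rightarrow> ('a::real_inner \<Rightarrow> real) \<Rightarrow> ('a \<Rightarrow> 'a) \<Rightarrow> bool" where
  "L_smooth L f grad \<longleftrightarrow>
     (\<forall>x y. f y \<le> f x + grad x \<bullet> (y - x) + L / 2 * (norm (y - x))\<^sup>2)"

definition mu_strongly_convex :: "real \<Rightarrow> ('a::real_inner \<Rightarrow> real) \<Rightarrow> ('a \<Rightarrow> 'a) \<Rightarrow> bool" where
  "mu_strongly_convex \<mu> f grad \<longleftrightarrow>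
     (\<forall>x y. f y \<ge> f x + grad x \<bullet> (y - x) + \<mu> / 2 * (norm (y - x))\<^sup>2)"

text \<open>Loss-Guarded L2O with deterministic gradient descent fallback:
  y is the arbitrary black-box proposal sequence, w the generated iterates.\<close>
definition loss_guarded_l2o_seq ::
  "('a::real_inner \<Rightarrow> real) \<Rightarrow> ('a \<Rightarrow> 'a) \<Rightarrow> real \<Rightarrow> real \<Rightarrow> (nat \<Rightarrow> 'a) \<Rightarrow> (nat \<Rightarrow> 'a) \<Rightarrow> bool" where
  "loss_guarded_l2o_seq f grad \<alpha> L y w \<longleftrightarrow>
     (\<forall>i. let z = w i - (\<alpha> / L) *\<^sub>R grad (w i)
          in w (Suc i) = (if f (y i) < f z then y i else z))"

end

theory Submission
  imports Defs
begin

lemma pl_aux: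
  fixes g d :: "'a::real_inner" and \<mu> :: real
  assumes "\<mu> > 0"
  shows "g \<bullet> d + \<mu> / 2 * (norm d)\<^sup>2 \<ge> - (norm g)\<^sup>2 / (2 * \<mu>)"
proof -
  have "0 \<le> (norm (g + \<mu> *\<^sub>R d))\<^sup>2" by simp
  also have "\<dots> = (norm g)\<^sup>2 + 2 * \<mu> * (g \<bullet> d) + \<mu>\<^sup>2 * (norm d)\<^sup>2"
    unfolding power2_norm_eq_inner
    by (simp add: inner_add_left inner_add_right inner_commute algebra_simps power2_eq_square)
  finally have "0 \<le> (norm g)\<^sup>2 + 2 * \<mu> * (g \<bullet> d) + \<mu>\<^sup>2 * (norm d)\<^sup>2" .
  then have "0 \<le> ((norm g)\<^sup>2 + 2 * \<mu> * (g \<bullet> d) + \<mu>\<^sup>2 * (norm d)\<^sup>2) / (2 * \<mu>)"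
    using assms by simp
  also have "\<dots> = (norm g)\<^sup>2 / (2 * \<mu>) + (g \<bullet> d + \<mu> / 2 * (norm d)\<^sup>2)"
    using assms by (simp add: field_simps power2_eq_square)
  finally show ?thesis by linarith
qed

lemma descent_aux:
  fixes g x :: "'a::real_inner" and L \<alpha> fx fz :: real
  assumes "L > 0" and a2: "fz \<le> fx + g \<bullet> ((x - (\<alpha> / L) *\<^sub>R g) - x) + L / 2 * (norm ((x - (\<alpha> / L) *\<^sub>R g) - x))\<^sup>2"
  shows "fz \<le> fx - (\<alpha> / L) * (1 - \<alpha> / 2) * (norm g)\<^sup>2"
proof -
  have "fz \<le> fx + g \<bullet> (- ((\<alpha> / L) *\<^sub>R g)) + L / 2 * (norm (- ((\<alpha> / L) *\<^sub>R g)))\<^sup>2"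
    using a2 by simp
  have "g \<bullet> (- ((\<alpha> / L) *\<^sub>R g)) = - (\<alpha> / L) * (norm g)\<^sup>2"
    by (simp add: power2_norm_eq_inner)
  moreover have "L / 2 * (norm (- ((\<alpha> / L) *\<^sub>R g)))\<^sup>2 = \<alpha>\<^sup>2 / (2 * L) * (norm g)\<^sup>2"
    using assms(1) by (simp add: power_mult_distrib power2_eq_square field_simps)
  ultimately have "fz \<le> fx - (\<alpha> / L) * (norm g)\<^sup>2 + \<alpha>\<^sup>2 / (2 * L) * (norm g)\<^sup>2"
    using `fz \<le> fx + g \<bullet> (- ((\<alpha> / L) *\<^sub>R g)) + L / 2 * (norm (- ((\<alpha> / L) *\<^sub>R g)))\<^sup>2` by linarith
  also have "\<dots> = fx - (\<alpha> / L) * (1 - \<alpha> / 2) * (norm g)\<^sup>2"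
    using assms(1) by (simp add: field_simps power2_eq_square)
  finally show ?thesis .
qed

theorem theorem3:
  fixes f :: "real ^ 'n \<Rightarrow> real" and grad :: "real ^ 'n \<Rightarrow> real ^ 'n"
    and \<mu> L \<alpha> :: real and wstar :: "real ^ 'n"
    and y w :: "nat \<Rightarrow> real ^ 'n"
  assumes "continuous_on UNIV f"
    and "is_gradient f grad"
    and "\<mu> > 0" and "L > 0"
    and "mu_strongly_convex \<mu> f grad"
    and "L_smooth L f grad"
    and "\<forall>v. f wstar \<le> f v"
    and "0 < \<alpha>" and "\<alpha> < min 2 (2 * \<mu> * L)"
    and "loss_guarded_l2o_seq f grad \<alpha> L y w"
  shows "w \<longlonglongrightarrow> wstar"
proof -
  note mu = assms(3) and Lp = assms(4) and al = assms(8) and al2 = assms(9)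
  have sc: "\<And>x y. f y \<ge> f x + grad x \<bullet> (y - x) + \<mu> / 2 * (norm (y - x))\<^sup>2"
    using assms(5) unfolding mu_strongly_convex_def by blast
  have sm: "\<And>x y. f y \<le> f x + grad x \<bullet> (y - x) + L / 2 * (norm (y - x))\<^sup>2"
    using assms(6) unfolding L_smooth_def by blast
  have mn: "\<And>v. f wstar \<le> f v" using assms(7) by blast
  define c where "c = (\<alpha> / L) * (1 - \<alpha> / 2)"
  have cpos: "c > 0" using al al2 Lp unfolding c_def by (simp add: field_simps)
  define e where "e i = f (w i) - f wstar" for i
  have e0: "e i \<ge> 0" for i using mn unfolding e_def by simp
  have desc: "f (w (Suc i)) \<le> f (w i) - c * (norm (grad (w i)))\<^sup>2" for i
  proof -
    define z where "z = w i - (\<alpha> / L) *\<^sub>R grad (w i)"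
    have step: "w (Suc i) = (if f (y i) < f z then y i else z)"
      using assms(10) unfolding loss_guarded_l2o_seq_def z_def Let_def by metis
    have "f (w (Suc i)) \<le> f z" using step by (auto split: if_splits)
    moreover have "f z \<le> f (w i) - c * (norm (grad (w i)))\<^sup>2"
      using descent_aux[OF Lp sm[where x="w i" and y="w i - (\<alpha> / L) *\<^sub>R grad (w i)"]] unfolding z_def c_def by simp
    ultimately show ?thesis by linarith
  qed
  have pl: "(norm (grad x))\<^sup>2 \<ge> 2 * \<mu> * (f x - f wstar)" for x
  proof -
    have "f wstar \<ge> f x + (grad x \<bullet> (wstar - x) + \<mu> / 2 * (norm (wstar - x))\<^sup>2)"
      using sc[where x=x and y=wstar] by simp
    moreover have "grad x \<bullet> (wstar - x) + \<mu> / 2 * (norm (wstar - x))\<^sup>2 \<ge> - (norm (grad x))\<^sup>2 / (2 * \<mu>)"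
      using pl_aux[OF mu] by blast
    ultimately have "f x - f wstar \<le> (norm (grad x))\<^sup>2 / (2 * \<mu>)" by linarith
    then show ?thesis using mu by (simp add: field_simps)
  qed
  define q where "q = max 0 (1 - 2 * \<mu> * c)"
  have q0: "q \<ge> 0" and q1: "q < 1" using mu cpos unfolding q_def by auto
  have rec: "e (Suc i) \<le> q * e i" for i
  proof -
    have "e (Suc i) \<le> e i - c * (2 * \<mu> * e i)"
      using desc[of i] pl[of "w i"] cpos unfolding e_def
      by (smt (verit) mult_left_mono)
    also have "\<dots> = (1 - 2 * \<mu> * c) * e i" by (simp add: algebra_simps)
    also have "\<dots> \<le> q * e i" unfolding q_def using e0[of i] by (intro mult_right_mono) auto
    finally show ?thesis .
  qed
  have bnd: "e i \<le> q ^ i * e 0" for i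
  proof (induction i)
    case 0 then show ?case by simp
  next
    case (Suc i)
    have "e (Suc i) \<le> q * e i" by (rule rec)
    also have "\<dots> \<le> q * (q ^ i * e 0)" using Suc q0 by (intro mult_left_mono) auto
    finally show ?case by simp
  qed
  have qlim: "(\<lambda>i. q ^ i * e 0) \<longlonglongrightarrow> 0"
    using LIMSEQ_power_zero[of q] q0 q1 by (auto intro: tendsto_mult_left_zero)
  have elim: "e \<longlonglongrightarrow> 0"
    by (rule tendsto_sandwich[of "\<lambda>_. 0" _ _ "\<lambda>i. q ^ i * e 0"])
       (use e0 bnd qlim in auto)
  have g0: "grad wstar = 0"
  proof -
    have "f wstar \<le> f (wstar - (1 / L) *\<^sub>R grad wstar)" by (rule mn)
    also have "\<dots> \<le> f wstar - (1 / L) * (1 - 1 / 2) * (norm (grad wstar))\<^sup>2"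
      using descent_aux[OF Lp sm[where x=wstar and y="wstar - (1 / L) *\<^sub>R grad wstar"]] by simp
    finally have "(1 / L) * (1 - 1 / 2) * (norm (grad wstar))\<^sup>2 \<le> 0" by linarith
    then have "(norm (grad wstar))\<^sup>2 \<le> 0" using Lp
      by (simp add: divide_le_0_iff)
    then show ?thesis by simp
  qed
  have dist: "(norm (w i - wstar))\<^sup>2 \<le> 2 / \<mu> * e i" for i
  proof -
    have "f (w i) \<ge> f wstar + \<mu> / 2 * (norm (w i - wstar))\<^sup>2"
      using sc[where x=wstar and y="w i"] g0 by simp
    then show ?thesis unfolding e_def using mu by (simp add: field_simps)
  qed
  have "(\<lambda>i. sqrt (2 / \<mu> * e i)) \<longlonglongrightarrow> sqrt (2 / \<mu> * 0)"
    by (intro tendsto_real_sqrt tendsto_mult_left elim)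
  then have slim: "(\<lambda>i. sqrt (2 / \<mu> * e i)) \<longlonglongrightarrow> 0" by simp
  have "(\<lambda>i. norm (w i - wstar)) \<longlonglongrightarrow> 0"
  proof (rule tendsto_sandwich[of "\<lambda>_. 0" _ _ "\<lambda>i. sqrt (2 / \<mu> * e i)"])
    show "\<forall>\<^sub>F i in sequentially. norm (w i - wstar) \<le> sqrt (2 / \<mu> * e i)"
      using dist by (intro always_eventually allI real_le_rsqrt) auto
  qed (use slim in auto)
  then show ?thesis using LIM_zero_cancel tendsto_norm_zero_iff by blast
qed

end
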